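(* Let $p\ge 2$, let $E_1,\dots,E_p$ be Banach spaces, $I$ a finite set, and for $k=1,\dots,p$ let $(d_i(k))_{i\in I}$ be elements of $E_k$ with $f_k=\sum_{i\in I}d_i(k)$. Let $(\varepsilon_i)_{i\in I}$ be independent random variables with $P(\varepsilon_i=1)=P(\varepsilon_i=-1)=1/2$ and put $S_k=\big(\mathbb E\|\sum_{i\in I}\varepsilon_id_i(k)\|^p\big)^{1/p}$. Then, in $E_1\widehat\otimes\cdots\widehat\otimes E_p$, $$\Big\|f_1\otimes\cdots\otimes f_p-\sum_{g\colon\{1,\dots,p\}\to I\ \text{injective}}d_{g(1)}(1)\otimes\cdots\otimes d_{g(p)}(p)\Big\|_\wedge\le\sum_{A\subset\{1,\dots,p\},\ |A|\le p-2}\ \prod_{k\in A}\|f_k\|\cdot\prod_{k\notin A}S_k\cdot(p-|A|)!\,.$$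
   Context: $E_1\widehat\otimes\cdots\widehat\otimes E_p$ denotes the projective tensor product of Banach spaces, with projective norm $\|\cdot\|_\wedge$. *)

theory Defs
  imports "HOL-Analysis.Analysis" "HOL-Probability.Probability"
begin

text \<open>The Banach spaces E_1,...,E_p are modelled as closed linear subspaces E k of one
  common real Banach space 'a (every family of Banach spaces embeds isometrically into
  such a common space, e.g. its l-infinity sum).  A p-tuple is a function nat => 'a,
  of which only the coordinates 1..p matter.\<close>

definition multilinear_on :: "nat \<Rightarrow> (nat \<Rightarrow> 'a::real_vector set) \<Rightarrow> ((nat \<Rightarrow> 'a) \<Rightarrow> real) \<Rightarrow> bool" where
  "multilinear_on p E \<phi> \<longleftrightarrow>
     (\<forall>x y. (\<forall>k\<in>{1..p}. x k = y k) \<longrightarrow> \<phi> x = \<phi> y) \<and>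
     (\<forall>x. (\<forall>j\<in>{1..p}. x j \<in> E j) \<longrightarrow>
        (\<forall>k\<in>{1..p}. \<forall>a\<in>E k. \<forall>b\<in>E k. \<forall>c::real.
           \<phi> (x(k := a + b)) = \<phi> (x(k := a)) + \<phi> (x(k := b)) \<and>
           \<phi> (x(k := c *\<^sub>R a)) = c * \<phi> (x(k := a))))"

text \<open>An element of the algebraic tensor product E_1 (x) ... (x) E_p is identified with the
  linear functional it induces on the space of (algebraic) multilinear forms;
  a list ys of p-tuples represents the tensor sum of the elementary tensors
  y 1 (x) ... (x) y p, y in ys.\<close>

definition represents :: "nat \<Rightarrow> (nat \<Rightarrow> 'a::real_vector set) \<Rightarrow> (((nat \<Rightarrow> 'a) \<Rightarrow> real) \<Rightarrow> real)
    \<Rightarrow> (nat \<Rightarrow> 'a) list \<Rightarrow> bool" where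
  "represents p E T ys \<longleftrightarrow>
     (\<forall>y\<in>set ys. \<forall>k\<in>{1..p}. y k \<in> E k) \<and>
     (\<forall>\<phi>. multilinear_on p E \<phi> \<longrightarrow> T \<phi> = (\<Sum>y\<leftarrow>ys. \<phi> y))"

text \<open>Projective norm of an element of the algebraic tensor product (which embeds isometrically
  into the completed projective tensor product).\<close>

definition proj_norm :: "nat \<Rightarrow> (nat \<Rightarrow> 'a::real_normed_vector set) \<Rightarrow> (((nat \<Rightarrow> 'a) \<Rightarrow> real) \<Rightarrow> real) \<Rightarrow> real" where
  "proj_norm p E T = Inf {(\<Sum>y\<leftarrow>ys. \<Prod>k\<in>{1..p}. norm (y k)) | ys. represents p E T ys}"

definition rademacher :: "'i set \<Rightarrow> ('i \<Rightarrow> real) pmf" where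
  "rademacher I = Pi_pmf I 0 (\<lambda>_. pmf_of_set {-1, 1})"

end

theory Submission
  imports Defs
begin

lemma ml_zero:
  assumes "multilinear_on p E \<phi>" "\<forall>j\<in>{1..p}. x j \<in> E j" "k \<in> {1..p}"
  shows "\<phi> (x(k := 0)) = 0"
proof -
  have "\<phi> (x(k := 0 *\<^sub>R x k)) = 0 * \<phi> (x(k := x k))"
    using assms unfolding multilinear_on_def by blast
  then show ?thesis by simp
qed

lemma ml_sum:
  assumes ml: "multilinear_on p E \<phi>" and x: "\<forall>j\<in>{1..p}. x j \<in> E j" and k: "k \<in> {1..p}"
    and sub: "subspace (E k)" and J: "finite J" and v: "\<And>i. i \<in> J \<Longrightarrow> v i \<in> E k"
  shows "\<phi> (x(k := \<Sum>i\<in>J. c i *\<^sub>R v i)) = (\<Sum>i\<in>J. c i * \<phi> (x(k := v i)))"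
  using J v
proof (induction J rule: finite_induct)
  case empty
  show ?case by (simp only: sum.empty ml_zero[OF ml x k])
next
  case (insert a J)
  have s: "(\<Sum>i\<in>J. c i *\<^sub>R v i) \<in> E k"
    using insert sub by (intro subspace_sum subspace_scale) auto
  have va: "v a \<in> E k" using insert by auto
  have ca: "c a *\<^sub>R v a \<in> E k" using va sub by (simp add: subspace_scale)
  have "\<phi> (x(k := \<Sum>i\<in>insert a J. c i *\<^sub>R v i)) = \<phi> (x(k := c a *\<^sub>R v a + (\<Sum>i\<in>J. c i *\<^sub>R v i)))"
    using insert by simp
  also have "\<dots> = \<phi> (x(k := c a *\<^sub>R v a)) + \<phi> (x(k := \<Sum>i\<in>J. c i *\<^sub>R v i))"
    using ml x k s ca unfolding multilinear_on_def by blast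
  also have "\<phi> (x(k := c a *\<^sub>R v a)) = c a * \<phi> (x(k := v a))"
    using ml x k va unfolding multilinear_on_def by blast
  finally have "\<phi> (x(k := \<Sum>i\<in>insert a J. c i *\<^sub>R v i)) = c a * \<phi> (x(k := v a)) + \<phi> (x(k := \<Sum>i\<in>J. c i *\<^sub>R v i))" .
  moreover have IH': "\<phi> (x(k := \<Sum>i\<in>J. c i *\<^sub>R v i)) = (\<Sum>i\<in>J. c i * \<phi> (x(k := v i)))"
    using insert by blast
  ultimately show ?case by (simp only: sum.insert[OF insert(1,2)])
qed

lemma ml_expand:
  assumes ml: "multilinear_on p E \<phi>" and x: "\<forall>j\<in>{1..p}. x j \<in> E j"
    and sub: "\<And>k. k \<in> {1..p} \<Longrightarrow> subspace (E k)" and I: "finite I"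
    and d: "\<And>i k. i \<in> I \<Longrightarrow> k \<in> {1..p} \<Longrightarrow> d i k \<in> E k"
    and K: "K \<subseteq> {1..p}"
  shows "\<phi> (\<lambda>k. if k \<in> K then (\<Sum>i\<in>I. c k i *\<^sub>R d i k) else x k)
     = (\<Sum>g\<in>K \<rightarrow>\<^sub>E I. (\<Prod>k\<in>K. c k (g k)) * \<phi> (\<lambda>k. if k \<in> K then d (g k) k else x k))"
proof -
  have fK: "finite K" using K finite_subset by blast
  show ?thesis using fK K x
  proof (induction K arbitrary: x rule: finite_induct)
    case empty
    then show ?case by simp
  next
    case (insert a K)
    have aP: "a \<in> {1..p}" using insert by auto
    define y where "y = (\<lambda>k. if k \<in> K then (\<Sum>i\<in>I. c k i *\<^sub>R d i k) else x k)"
    have yE: "\<forall>j\<in>{1..p}. y j \<in> E j"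
      using insert(4,5) sub d unfolding y_def by (auto intro!: subspace_sum subspace_scale)
    have "(\<lambda>k. if k \<in> insert a K then (\<Sum>i\<in>I. c k i *\<^sub>R d i k) else x k)
        = y(a := \<Sum>i\<in>I. c a i *\<^sub>R d i a)"
      unfolding y_def by auto
    hence "\<phi> (\<lambda>k. if k \<in> insert a K then (\<Sum>i\<in>I. c k i *\<^sub>R d i k) else x k)
        = (\<Sum>i\<in>I. c a i * \<phi> (y(a := d i a)))"
      using ml_sum[OF ml yE aP sub[OF aP] I, of "\<lambda>i. d i a" "c a"] d aP by simp
    also have "\<dots> = (\<Sum>i\<in>I. c a i * (\<Sum>g\<in>K \<rightarrow>\<^sub>E I. (\<Prod>k\<in>K. c k (g k)) *
          \<phi> (\<lambda>k. if k \<in> K then d (g k) k else (x(a := d i a)) k)))"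
    proof (rule sum.cong[OF refl])
      fix i assume i: "i \<in> I"
      have xi: "\<forall>j\<in>{1..p}. (x(a := d i a)) j \<in> E j" using insert(5) d[OF i aP] by auto
      have "y(a := d i a) = (\<lambda>k. if k \<in> K then (\<Sum>i\<in>I. c k i *\<^sub>R d i k) else (x(a := d i a)) k)"
        unfolding y_def using insert(2) by auto
      then show "c a i * \<phi> (y(a := d i a)) = c a i * (\<Sum>g\<in>K \<rightarrow>\<^sub>E I. (\<Prod>k\<in>K. c k (g k)) *
          \<phi> (\<lambda>k. if k \<in> K then d (g k) k else (x(a := d i a)) k))"
        using insert.IH[OF _ xi] insert(4) by simp
    qed
    also have "\<dots> = (\<Sum>(i,g)\<in>I \<times> (K \<rightarrow>\<^sub>E I). c a i * ((\<Prod>k\<in>K. c k (g k)) *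
          \<phi> (\<lambda>k. if k \<in> K then d (g k) k else (x(a := d i a)) k)))"
      by (simp add: sum.cartesian_product sum_distrib_left)
    also have "\<dots> = (\<Sum>g\<in>insert a K \<rightarrow>\<^sub>E I. (\<Prod>k\<in>insert a K. c k (g k)) *
          \<phi> (\<lambda>k. if k \<in> insert a K then d (g k) k else x k))"
    proof (rule sum.reindex_bij_witness[of _ "\<lambda>g. (g a, g(a := undefined))" "\<lambda>(i,g). g(a := i)"], goal_cases)
      case (1 ig) then show ?case using insert(2) by (auto simp: PiE_def extensional_def fun_eq_iff)
    next
      case (2 ig) then show ?case by (auto simp: PiE_def extensional_def)
    next
      case (3 g) then show ?case by auto
    next
      case (4 g) then show ?case using insert(2) by (auto simp: PiE_def extensional_def)
    next
      case (5 ig)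
      then obtain i g where ig: "ig = (i,g)" "i \<in> I" "g \<in> K \<rightarrow>\<^sub>E I" by auto
      have h1: "(\<Prod>k\<in>insert a K. c k ((g(a := i)) k)) = c a i * (\<Prod>k\<in>K. c k (g k))"
        using insert(1,2) by (auto intro!: prod.cong)
      have h2: "(\<lambda>k. if k \<in> insert a K then d ((g(a := i)) k) k else x k)
          = (\<lambda>k. if k \<in> K then d (g k) k else (x(a := d i a)) k)"
        using insert(2) by auto
      show ?case by (simp only: ig(1) prod.case h1 h2 mult.assoc)
    qed
    finally show ?case .
  qed
qed

lemma ml_expand_full:
  assumes ml: "multilinear_on p E \<phi>"
    and sub: "\<And>k. k \<in> {1..p} \<Longrightarrow> subspace (E k)" and I: "finite I"
    and d: "\<And>i k. i \<in> I \<Longrightarrow> k \<in> {1..p} \<Longrightarrow> d i k \<in> E k"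
  shows "\<phi> (\<lambda>k. \<Sum>i\<in>I. c k i *\<^sub>R d i k)
     = (\<Sum>g\<in>{1..p} \<rightarrow>\<^sub>E I. (\<Prod>k\<in>{1..p}. c k (g k)) * \<phi> (\<lambda>k. d (g k) k))"
proof -
  have x: "\<forall>j\<in>{1..p}. (0::'a) \<in> E j" using sub subspace_0 by blast
  have loc: "\<And>y z. (\<forall>k\<in>{1..p}. y k = z k) \<Longrightarrow> \<phi> y = \<phi> z"
    using ml unfolding multilinear_on_def by blast
  have "\<phi> (\<lambda>k. \<Sum>i\<in>I. c k i *\<^sub>R d i k) = \<phi> (\<lambda>k. if k \<in> {1..p} then (\<Sum>i\<in>I. c k i *\<^sub>R d i k) else 0)"
    by (rule loc) simp
  also have "\<dots> = (\<Sum>g\<in>{1..p} \<rightarrow>\<^sub>E I. (\<Prod>k\<in>{1..p}. c k (g k)) *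
       \<phi> (\<lambda>k. if k \<in> {1..p} then d (g k) k else 0))"
    by (rule ml_expand[OF ml x sub I d]) auto
  also have "\<dots> = (\<Sum>g\<in>{1..p} \<rightarrow>\<^sub>E I. (\<Prod>k\<in>{1..p}. c k (g k)) * \<phi> (\<lambda>k. d (g k) k))"
    by (intro sum.cong refl arg_cong2[where f="(*)"] loc) simp
  finally show ?thesis .
qed


lemma sign_sum:
  fixes g :: "nat \<Rightarrow> 'i"
  assumes P: "finite P"
  shows "(\<Sum>\<sigma>\<in>{\<sigma>. \<sigma> permutes P}. if g \<circ> \<sigma> = g then real_of_int (sign \<sigma>) else 0) = (if inj_on g P then 1 else 0)"
proof (cases "inj_on g P")
  case True
  have "(\<Sum>\<sigma>\<in>{\<sigma>. \<sigma> permutes P}. if g \<circ> \<sigma> = g then real_of_int (sign \<sigma>) else 0)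
      = (\<Sum>\<sigma>\<in>{\<sigma>. \<sigma> permutes P}. if \<sigma> = id then 1 else 0)"
  proof (rule sum.cong[OF refl])
    fix \<sigma> assume s: "\<sigma> \<in> {\<sigma>. \<sigma> permutes P}"
    have 1: "\<sigma> = id" if gs: "g \<circ> \<sigma> = g"
    proof
      fix x show "\<sigma> x = id x"
      proof (cases "x \<in> P")
        case True
        then have "\<sigma> x \<in> P" using s permutes_in_image by fastforce
        moreover have "g (\<sigma> x) = g x" using gs by (metis comp_apply)
        ultimately show ?thesis using \<open>inj_on g P\<close> True by (auto dest: inj_onD)
      next
        case False then show ?thesis using s permutes_not_in by fastforce
      qed
    qed
    show "(if g \<circ> \<sigma> = g then real_of_int (sign \<sigma>) else 0) = (if \<sigma> = id then 1 else 0)"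
      using 1 by auto
  qed
  also have "\<dots> = 1" using P by (simp add: sum.delta' finite_permutations)
  finally show ?thesis using True by simp
next
  case False
  then obtain a b where ab: "a \<in> P" "b \<in> P" "a \<noteq> b" "g a = g b"
    unfolding inj_on_def by blast
  define \<tau> where "\<tau> = Transposition.transpose a b"
  have tp: "\<tau> permutes P" unfolding \<tau>_def using ab permutes_swap_id by metis
  have gt: "g \<circ> \<tau> = g" unfolding \<tau>_def using ab
    by (auto simp: fun_eq_iff Transposition.transpose_def)
  have tt: "\<tau> \<circ> \<tau> = id" unfolding \<tau>_def by simp
  let ?F = "\<lambda>\<sigma>. if g \<circ> \<sigma> = g then real_of_int (sign \<sigma>) else 0"
  have neg: "?F (\<sigma> \<circ> \<tau>) = - ?F \<sigma>" if s: "\<sigma> permutes P" for \<sigma>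
  proof -
    have c1: "g \<circ> \<sigma> = g" if "g \<circ> (\<sigma> \<circ> \<tau>) = g"
    proof -
      have "g \<circ> \<sigma> = g \<circ> (\<sigma> \<circ> \<tau>) \<circ> \<tau>" using tt by (simp add: comp_assoc)
      also have "\<dots> = g" using that gt by simp
      finally show ?thesis .
    qed
    have c2: "g \<circ> (\<sigma> \<circ> \<tau>) = g" if "g \<circ> \<sigma> = g"
      using that gt by (simp add: o_assoc)
    have "sign (\<sigma> \<circ> \<tau>) = - sign \<sigma>"
      using sign_compose[OF permutes_imp_permutation[OF P s] permutes_imp_permutation[OF P tp]]
        sign_swap_id[of a b] ab unfolding \<tau>_def by simp
    then show ?thesis using c1 c2 by auto
  qed
  have "(\<Sum>\<sigma>\<in>{\<sigma>. \<sigma> permutes P}. ?F \<sigma>) = (\<Sum>\<sigma>\<in>{\<sigma>. \<sigma> permutes P}. ?F (\<sigma> \<circ> \<tau>))"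
    by (rule sum.reindex_bij_witness[of _ "\<lambda>\<sigma>. \<sigma> \<circ> \<tau>" "\<lambda>\<sigma>. \<sigma> \<circ> \<tau>"])
       (use tp tt permutes_compose in \<open>auto simp: o_assoc[symmetric]\<close>)
  also have "\<dots> = - (\<Sum>\<sigma>\<in>{\<sigma>. \<sigma> permutes P}. ?F \<sigma>)"
    using neg by (simp add: sum_negf)
  finally show ?thesis using False by simp
qed

definition Dl :: "'i set \<Rightarrow> ('i \<Rightarrow> real) set" where
  "Dl I = PiE_dflt I 0 (\<lambda>_. {-1, 1})"

definition Om :: "nat \<Rightarrow> 'i set \<Rightarrow> (nat \<Rightarrow> 'i \<Rightarrow> real) set" where
  "Om p I = PiE {1..p} (\<lambda>_. Dl I)"

lemma Dl_mem: "\<delta> \<in> Dl I \<longleftrightarrow> (\<forall>i. (i \<in> I \<longrightarrow> \<delta> i \<in> {-1, 1}) \<and> (i \<notin> I \<longrightarrow> \<delta> i = 0))"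
  unfolding Dl_def PiE_dflt_def by auto

lemma Dl_finite: "finite I \<Longrightarrow> finite (Dl I)"
  unfolding Dl_def by (rule finite_PiE_dflt) auto

lemma Dl_card: "finite I \<Longrightarrow> card (Dl I) = 2 ^ card I"
  unfolding Dl_def by (subst card_PiE_dflt) (auto simp: numeral_2_eq_2)

lemma Dl_sq: "\<delta> \<in> Dl I \<Longrightarrow> i \<in> I \<Longrightarrow> \<delta> i * \<delta> i = 1"
  unfolding Dl_mem by auto

lemma Dl_ne: "(\<lambda>i. if i \<in> I then 1 else 0) \<in> Dl I"
  unfolding Dl_mem by auto

lemma Dl_corr:
  assumes I: "finite I" and a: "a \<in> I" and b: "b \<in> I"
  shows "(\<Sum>\<delta>\<in>Dl I. \<delta> a * \<delta> b) = (if a = b then real (card (Dl I)) else 0)"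
proof (cases "a = b")
  case True
  then show ?thesis using Dl_sq[OF _ a] by simp
next
  case False
  have "(\<Sum>\<delta>\<in>Dl I. \<delta> a * \<delta> b) = (\<Sum>\<delta>\<in>Dl I. (\<delta>(a := - \<delta> a)) a * (\<delta>(a := - \<delta> a)) b)"
    by (rule sum.reindex_bij_witness[of _ "\<lambda>\<delta>. \<delta>(a := - \<delta> a)" "\<lambda>\<delta>. \<delta>(a := - \<delta> a)"])
       (use a in \<open>auto simp: Dl_mem\<close>)
  also have "\<dots> = - (\<Sum>\<delta>\<in>Dl I. \<delta> a * \<delta> b)"
    using False by (simp add: sum_negf)
  finally show ?thesis using False by simp
qed

lemma rademacher_expectation:
  assumes I: "finite I"
  shows "measure_pmf.expectation (rademacher I) F = (\<Sum>\<delta>\<in>Dl I. F \<delta>) / real (card (Dl I))"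
proof -
  have set: "set_pmf (rademacher I) = Dl I"
    unfolding rademacher_def Dl_def using I by (simp add: set_Pi_pmf o_def)
  have pm: "pmf (rademacher I) \<delta> = 1 / real (card (Dl I))" if "\<delta> \<in> Dl I" for \<delta>
  proof -
    have "pmf (rademacher I) \<delta> = (\<Prod>i\<in>I. pmf (pmf_of_set {-1, 1::real}) (\<delta> i))"
      unfolding rademacher_def using I that by (subst pmf_Pi) (auto simp: Dl_mem)
    also have "\<dots> = (\<Prod>i\<in>I. 1 / 2)"
      using that by (intro prod.cong refl) (auto simp: Dl_mem)
    finally show ?thesis using Dl_card[OF I] by (simp add: power_one_over)
  qed
  have "measure_pmf.expectation (rademacher I) F = (\<Sum>\<delta>\<in>Dl I. F \<delta> * pmf (rademacher I) \<delta>)"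
    by (rule integral_measure_pmf_real) (auto simp: set Dl_finite I)
  also have "\<dots> = (\<Sum>\<delta>\<in>Dl I. F \<delta> / real (card (Dl I)))"
    by (intro sum.cong refl) (simp add: pm)
  finally show ?thesis by (simp add: sum_divide_distrib)
qed

lemma Om_finite: "finite I \<Longrightarrow> finite (Om p I)"
  unfolding Om_def by (intro finite_PiE) (auto simp: Dl_finite)

lemma Om_card: "finite I \<Longrightarrow> card (Om p I) = card (Dl I) ^ p"
  unfolding Om_def by (subst card_PiE) auto

lemma Dl_card_pos: "finite I \<Longrightarrow> card (Dl I) > 0"
  by (simp add: Dl_card)

lemma Om_single:
  assumes I: "finite I" and k: "k \<in> {1..p}"
  shows "(\<Sum>\<epsilon>\<in>Om p I. G (\<epsilon> k)) = real (card (Dl I)) ^ (p - 1) * (\<Sum>\<delta>\<in>Dl I. G \<delta>)"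
proof -
  let ?h = "\<lambda>j \<delta>. if j = k then G \<delta> else (1::real)"
  have "(\<Sum>\<epsilon>\<in>Om p I. G (\<epsilon> k)) = (\<Sum>\<epsilon>\<in>Om p I. \<Prod>j\<in>{1..p}. ?h j (\<epsilon> j))"
    using k by (intro sum.cong refl) (simp add: prod.delta)
  also have "\<dots> = (\<Prod>j\<in>{1..p}. \<Sum>\<delta>\<in>Dl I. ?h j \<delta>)"
    unfolding Om_def by (rule prod_sum_PiE[symmetric]) (auto simp: Dl_finite I)
  also have "\<dots> = (\<Sum>\<delta>\<in>Dl I. G \<delta>) * (\<Prod>j\<in>{1..p} - {k}. real (card (Dl I)))"
    using k by (subst prod.remove[of _ k]) (auto intro!: prod.cong)
  also have "\<dots> = real (card (Dl I)) ^ (p - 1) * (\<Sum>\<delta>\<in>Dl I. G \<delta>)"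
    using k by simp
  finally show ?thesis .
qed

lemma Om_swap:
  assumes j: "j \<in> {1..p}" and k: "k \<in> {1..p}" and jk: "j \<noteq> k"
  shows "(\<Sum>\<epsilon>\<in>Om p I. G (\<lambda>i. \<epsilon> k i * \<epsilon> j i)) = (\<Sum>\<epsilon>\<in>Om p I. G (\<epsilon> k))"
proof -
  have key: "\<epsilon>(k := \<lambda>i. \<epsilon> k i * \<epsilon> j i) \<in> Om p I \<and>
     (\<epsilon>(k := \<lambda>i. \<epsilon> k i * \<epsilon> j i))(k := \<lambda>i. (\<epsilon>(k := \<lambda>i. \<epsilon> k i * \<epsilon> j i)) k i * (\<epsilon>(k := \<lambda>i. \<epsilon> k i * \<epsilon> j i)) j i) = \<epsilon>"
    if e: "\<epsilon> \<in> Om p I" for \<epsilon>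
  proof -
    have ej: "\<epsilon> j \<in> Dl I" "\<epsilon> k \<in> Dl I" using e j k unfolding Om_def by auto
    have prod: "(\<lambda>i. \<epsilon> k i * \<epsilon> j i) \<in> Dl I" using ej unfolding Dl_mem by force
    have inv: "(\<lambda>i. (\<epsilon> k i * \<epsilon> j i) * \<epsilon> j i) = \<epsilon> k"
    proof
      fix i show "\<epsilon> k i * \<epsilon> j i * \<epsilon> j i = \<epsilon> k i"
        using ej unfolding Dl_mem by (cases "i \<in> I") auto
    qed
    show ?thesis
      using e prod k jk inv unfolding Om_def by (auto simp: PiE_def extensional_def fun_eq_iff)
  qed
  show ?thesis
    by (rule sum.reindex_bij_witness[of _ "\<lambda>\<epsilon>. \<epsilon>(k := \<lambda>i. \<epsilon> k i * \<epsilon> j i)" "\<lambda>\<epsilon>. \<epsilon>(k := \<lambda>i. \<epsilon> k i * \<epsilon> j i)"])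
       (use key in auto)
qed

lemma Om_prod:
  assumes I: "finite I" and s: "\<sigma> permutes {1..p}" and g: "g \<in> {1..p} \<rightarrow>\<^sub>E I"
  shows "(\<Sum>\<epsilon>\<in>Om p I. \<Prod>k\<in>{1..p}. \<epsilon> k (g k) * \<epsilon> (\<sigma> k) (g k))
         = (if g \<circ> \<sigma> = g then real (card (Om p I)) else 0)"
proof -
  have eq: "(\<Prod>k\<in>{1..p}. \<epsilon> k (g k) * \<epsilon> (\<sigma> k) (g k))
      = (\<Prod>j\<in>{1..p}. \<epsilon> j (g j) * \<epsilon> j (g (inv \<sigma> j)))" for \<epsilon>
  proof -
    have "(\<Prod>j\<in>{1..p}. \<epsilon> j (g (inv \<sigma> j))) = (\<Prod>k\<in>{1..p}. \<epsilon> (\<sigma> k) (g (inv \<sigma> (\<sigma> k))))"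
      using prod.permute[OF s, of "\<lambda>j. \<epsilon> j (g (inv \<sigma> j))"] by (simp add: o_def)
    also have "\<dots> = (\<Prod>k\<in>{1..p}. \<epsilon> (\<sigma> k) (g k))"
      using permutes_inverses(2)[OF s] by simp
    finally show ?thesis by (simp add: prod.distrib)
  qed
  have "(\<Sum>\<epsilon>\<in>Om p I. \<Prod>k\<in>{1..p}. \<epsilon> k (g k) * \<epsilon> (\<sigma> k) (g k))
      = (\<Sum>\<epsilon>\<in>Om p I. \<Prod>j\<in>{1..p}. \<epsilon> j (g j) * \<epsilon> j (g (inv \<sigma> j)))"
    by (rule sum.cong[OF refl], rule eq)
  also have "\<dots> = (\<Prod>j\<in>{1..p}. \<Sum>\<delta>\<in>Dl I. \<delta> (g j) * \<delta> (g (inv \<sigma> j)))"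
    unfolding Om_def by (rule prod_sum_PiE[symmetric]) (auto simp: Dl_finite I)
  also have "\<dots> = (\<Prod>j\<in>{1..p}. if g j = g (inv \<sigma> j) then real (card (Dl I)) else 0)"
  proof (rule prod.cong[OF refl])
    fix j assume j: "j \<in> {1..p}"
    have "inv \<sigma> j \<in> {1..p}" using j permutes_in_image[OF permutes_inv[OF s]] by blast
    then show "(\<Sum>\<delta>\<in>Dl I. \<delta> (g j) * \<delta> (g (inv \<sigma> j))) = (if g j = g (inv \<sigma> j) then real (card (Dl I)) else 0)"
      using Dl_corr[OF I] g j by (auto simp: PiE_def Pi_def)
  qed
  also have "\<dots> = (if g \<circ> \<sigma> = g then real (card (Om p I)) else 0)"
  proof -
    have iff: "(\<forall>j\<in>{1..p}. g j = g (inv \<sigma> j)) \<longleftrightarrow> g \<circ> \<sigma> = g"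
    proof
      assume A: "\<forall>j\<in>{1..p}. g j = g (inv \<sigma> j)"
      show "g \<circ> \<sigma> = g"
      proof
        fix k show "(g \<circ> \<sigma>) k = g k"
        proof (cases "k \<in> {1..p}")
          case True
          then have "\<sigma> k \<in> {1..p}" using permutes_in_image[OF s] by blast
          then show ?thesis using A permutes_inverses(2)[OF s] by (metis comp_apply)
        next
          case False then show ?thesis using permutes_not_in[OF s] by simp
        qed
      qed
    next
      assume B: "g \<circ> \<sigma> = g"
      show "\<forall>j\<in>{1..p}. g j = g (inv \<sigma> j)"
        using B permutes_inverses(1)[OF s] by (metis comp_apply)
    qed
    show ?thesis
    proof (cases "g \<circ> \<sigma> = g")
      case True
      then show ?thesis using iff by (simp add: Om_card I)
    next
      case False
      then obtain j where "j \<in> {1..p}" "g j \<noteq> g (inv \<sigma> j)" using iff by blast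
      then have "(\<Prod>j\<in>{1..p}. if g j = g (inv \<sigma> j) then real (card (Dl I)) else 0) = 0"
        by (intro prod_zero) auto
      then show ?thesis using False by simp
    qed
  qed
  finally show ?thesis .
qed


lemma pow_powr_inv:
  assumes "(x::real) \<ge> 0" "n > 0"
  shows "(x ^ n) powr (1 / real n) = x"
proof (cases "x = 0")
  case True then show ?thesis using assms by simp
next
  case False
  then have x: "x > 0" using assms by simp
  have "x ^ n = x powr real n" using powr_realpow[OF x] by simp
  then show ?thesis using assms x by (simp add: powr_powr)
qed

lemma holder_avg:
  fixes Y :: "nat \<Rightarrow> 'b \<Rightarrow> real"
  assumes \<Omega>: "finite \<Omega>" "\<Omega> \<noteq> {}" and K: "finite K" "card K = n" "n > 0"
    and Y: "\<And>k \<omega>. k \<in> K \<Longrightarrow> \<omega> \<in> \<Omega> \<Longrightarrow> Y k \<omega> \<ge> 0"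
  shows "(\<Sum>\<omega>\<in>\<Omega>. \<Prod>k\<in>K. Y k \<omega>) / card \<Omega>
         \<le> (\<Prod>k\<in>K. ((\<Sum>\<omega>\<in>\<Omega>. Y k \<omega> ^ n) / card \<Omega>) powr (1 / real n))"
proof -
  define M where "M k = (\<Sum>\<omega>\<in>\<Omega>. Y k \<omega> ^ n) / card \<Omega>" for k
  define N where "N k = M k powr (1 / real n)" for k
  have cO: "real (card \<Omega>) > 0" using \<Omega> by (simp add: card_gt_0_iff)
  have M0: "M k \<ge> 0" if "k \<in> K" for k
    unfolding M_def using Y that by (intro divide_nonneg_nonneg sum_nonneg) auto
  have RHS0: "(\<Prod>k\<in>K. N k) \<ge> 0" unfolding N_def by (intro prod_nonneg) auto
  show ?thesis
  proof (cases "\<exists>k\<in>K. M k = 0")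
    case True
    then obtain k where k: "k \<in> K" "M k = 0" by blast
    have "(\<Sum>\<omega>\<in>\<Omega>. Y k \<omega> ^ n) = 0" using k cO unfolding M_def by simp
    then have "\<forall>\<omega>\<in>\<Omega>. Y k \<omega> ^ n = 0"
      using sum_nonneg_eq_0_iff[OF \<Omega>(1), of "\<lambda>\<omega>. Y k \<omega> ^ n"] Y k K(3) by auto
    then have "\<forall>\<omega>\<in>\<Omega>. Y k \<omega> = 0" by simp
    then have "\<forall>\<omega>\<in>\<Omega>. (\<Prod>k\<in>K. Y k \<omega>) = 0" using k K by (metis prod_zero)
    then have "(\<Sum>\<omega>\<in>\<Omega>. \<Prod>k\<in>K. Y k \<omega>) = 0" by simp
    then show ?thesis using RHS0 unfolding N_def M_def by simp
  next
    case False
    then have Mp: "M k > 0" if "k \<in> K" for k using M0 that by force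
    have Np: "N k > 0" if "k \<in> K" for k unfolding N_def using Mp[OF that] by simp
    have NM: "N k ^ n = M k" if "k \<in> K" for k
    proof -
      have "N k ^ n = N k powr real n" using powr_realpow[OF Np[OF that]] by simp
      also have "\<dots> = M k" unfolding N_def using K Mp[OF that] by (simp add: powr_powr)
      finally show ?thesis .
    qed
    have pt: "(\<Prod>k\<in>K. Y k \<omega> / N k) \<le> (\<Sum>k\<in>K. (Y k \<omega> / N k) ^ n / n)" if w: "\<omega> \<in> \<Omega>" for \<omega>
    proof -
      have nn: "\<And>k. k \<in> K \<Longrightarrow> Y k \<omega> / N k \<ge> 0" using Y w Np by (simp add: less_imp_le)
      have "(\<Prod>k\<in>K. Y k \<omega> / N k) = ((\<Prod>k\<in>K. Y k \<omega> / N k) ^ n) powr (1 / real n)"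
        using K nn by (simp add: pow_powr_inv prod_nonneg)
      also have "\<dots> = (\<Prod>k\<in>K. (Y k \<omega> / N k) ^ n) powr (1 / real (card K))"
        using K by (simp add: prod_power_distrib)
      also have "\<dots> \<le> (\<Sum>k\<in>K. (Y k \<omega> / N k) ^ n / card K)"
        using K nn by (intro arith_geom_mean) auto
      finally show ?thesis using K by simp
    qed
    have "(\<Sum>\<omega>\<in>\<Omega>. \<Prod>k\<in>K. Y k \<omega> / N k) \<le> (\<Sum>\<omega>\<in>\<Omega>. \<Sum>k\<in>K. (Y k \<omega> / N k) ^ n / n)"
      using pt by (rule sum_mono)
    also have "\<dots> = (\<Sum>k\<in>K. (\<Sum>\<omega>\<in>\<Omega>. Y k \<omega> ^ n) / (N k ^ n * n))"
      by (subst sum.swap) (simp add: power_divide sum_divide_distrib)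
    also have "\<dots> = (\<Sum>k\<in>K. real (card \<Omega>) / n)"
    proof (rule sum.cong[OF refl])
      fix k assume k: "k \<in> K"
      have "(\<Sum>\<omega>\<in>\<Omega>. Y k \<omega> ^ n) = M k * card \<Omega>" unfolding M_def using cO by simp
      then show "(\<Sum>\<omega>\<in>\<Omega>. Y k \<omega> ^ n) / (N k ^ n * n) = real (card \<Omega>) / n"
        using NM[OF k] Mp[OF k] K by simp
    qed
    also have "\<dots> = card \<Omega>" using K by simp
    finally have A: "(\<Sum>\<omega>\<in>\<Omega>. \<Prod>k\<in>K. Y k \<omega> / N k) \<le> card \<Omega>" .
    have "(\<Sum>\<omega>\<in>\<Omega>. \<Prod>k\<in>K. Y k \<omega> / N k) = (\<Sum>\<omega>\<in>\<Omega>. \<Prod>k\<in>K. Y k \<omega>) / (\<Prod>k\<in>K. N k)"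
      by (simp add: prod_dividef sum_divide_distrib)
    with A have "(\<Sum>\<omega>\<in>\<Omega>. \<Prod>k\<in>K. Y k \<omega>) \<le> card \<Omega> * (\<Prod>k\<in>K. N k)"
      using Np by (simp add: divide_le_eq prod_pos mult.commute)
    then show ?thesis unfolding N_def M_def using cO by (simp add: divide_le_eq mult.commute)
  qed
qed

lemma fix_card:
  assumes s: "\<sigma> permutes {1..p}" and ne: "\<sigma> \<noteq> id"
  shows "card {k\<in>{1..p}. \<sigma> k = k} \<le> p - 2"
proof -
  obtain a where a: "\<sigma> a \<noteq> a" using ne by (auto simp: fun_eq_iff)
  have aP: "a \<in> {1..p}" using a permutes_not_in[OF s] by blast
  define b where "b = \<sigma> a"
  have bP: "b \<in> {1..p}" unfolding b_def using aP permutes_in_image[OF s] by blast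
  have b: "\<sigma> b \<noteq> b"
  proof
    assume "\<sigma> b = b"
    then have "\<sigma> b = \<sigma> a" unfolding b_def by simp
    then have "b = a" using permutes_inj[OF s] by (auto dest: injD)
    then show False using a b_def by simp
  qed
  have ab: "a \<noteq> b" using a b_def by auto
  have sub: "{a, b} \<subseteq> {1..p} - {k\<in>{1..p}. \<sigma> k = k}" using aP bP a b by auto
  have "2 \<le> card ({1..p} - {k\<in>{1..p}. \<sigma> k = k})"
    using card_mono[OF _ sub] ab by simp
  moreover have "card ({1..p} - {k\<in>{1..p}. \<sigma> k = k}) = p - card {k\<in>{1..p}. \<sigma> k = k}"
    by (subst card_Diff_subset) auto
  ultimately show ?thesis by simp
qed

lemma perm_fix_sum:
  fixes B :: "nat set \<Rightarrow> real"
  assumes B: "\<And>A. A \<subseteq> {1..p} \<Longrightarrow> B A \<ge> 0"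
  shows "(\<Sum>\<sigma>\<in>{\<sigma>. \<sigma> permutes {1..p}} - {id}. B {k\<in>{1..p}. \<sigma> k = k})
       \<le> (\<Sum>A\<in>{A. A \<subseteq> {1..p} \<and> card A \<le> p - 2}. B A * fact (p - card A))"
proof -
  let ?Q = "{\<sigma>. \<sigma> permutes {1..p}} - {id}"
  let ?F = "\<lambda>\<sigma>. {k\<in>{1..p}. \<sigma> k = k}"
  let ?A = "{A. A \<subseteq> {1..p} \<and> card A \<le> p - 2}"
  have fQ: "finite ?Q" using finite_permutations[of "{1..p}"] by simp
  have fA: "finite ?A" by (rule finite_subset[of _ "Pow {1..p}"]) auto
  have img: "?F ` ?Q \<subseteq> ?A" using fix_card by auto
  have "(\<Sum>\<sigma>\<in>?Q. B (?F \<sigma>)) = (\<Sum>A\<in>?A. \<Sum>\<sigma>\<in>{\<sigma>. \<sigma> \<in> ?Q \<and> ?F \<sigma> = A}. B (?F \<sigma>))"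
    by (rule sum.group[OF fQ fA img, symmetric])
  also have "\<dots> \<le> (\<Sum>A\<in>?A. B A * fact (p - card A))"
  proof (rule sum_mono)
    fix A assume A: "A \<in> ?A"
    have eqc: "(\<Sum>\<sigma>\<in>{\<sigma>. \<sigma> \<in> ?Q \<and> ?F \<sigma> = A}. B (?F \<sigma>)) = card {\<sigma>. \<sigma> \<in> ?Q \<and> ?F \<sigma> = A} * B A"
      by simp
    have "card {\<sigma>. \<sigma> \<in> ?Q \<and> ?F \<sigma> = A} \<le> card {\<sigma>. \<sigma> permutes ({1..p} - A)}"
    proof (rule card_mono)
      show "finite {\<sigma>. \<sigma> permutes ({1..p} - A)}" by (rule finite_permutations) auto
      show "{\<sigma>. \<sigma> \<in> ?Q \<and> ?F \<sigma> = A} \<subseteq> {\<sigma>. \<sigma> permutes ({1..p} - A)}"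
      proof
        fix \<sigma> assume "\<sigma> \<in> {\<sigma>. \<sigma> \<in> ?Q \<and> ?F \<sigma> = A}"
        then have s: "\<sigma> permutes {1..p}" and FA: "?F \<sigma> = A" by auto
        have "\<forall>x. x \<notin> {1..p} - A \<longrightarrow> \<sigma> x = x"
          using FA permutes_not_in[OF s] by auto
        moreover have "\<forall>y. \<exists>!x. \<sigma> x = y" using s unfolding permutes_def by blast
        ultimately show "\<sigma> \<in> {\<sigma>. \<sigma> permutes ({1..p} - A)}" unfolding permutes_def by blast
      qed
    qed
    also have "card {\<sigma>. \<sigma> permutes ({1..p} - A)} = fact (p - card A)"
    proof -
      have "card ({1..p} - A) = p - card A" using A by (subst card_Diff_subset) (auto intro: finite_subset)
      then show ?thesis by (intro card_permutations) auto
    qed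
    finally have cf: "card {\<sigma>. \<sigma> \<in> ?Q \<and> ?F \<sigma> = A} \<le> (fact (p - card A) :: nat)" .
    have "real (card {\<sigma>. \<sigma> \<in> ?Q \<and> ?F \<sigma> = A}) \<le> fact (p - card A)"
      using of_nat_mono[OF cf, where 'a=real] by simp
    then have "real (card {\<sigma>. \<sigma> \<in> ?Q \<and> ?F \<sigma> = A}) * B A \<le> fact (p - card A) * B A"
      using B A by (intro mult_right_mono) auto
    then show "(\<Sum>\<sigma>\<in>{\<sigma>. \<sigma> \<in> ?Q \<and> ?F \<sigma> = A}. B (?F \<sigma>)) \<le> B A * fact (p - card A)"
      using eqc by (simp add: mult.commute)
  qed
  finally show ?thesis .
qed

lemma proj_norm_le:
  assumes fin: "finite A" and y: "\<And>a k. a \<in> A \<Longrightarrow> k \<in> {1..p} \<Longrightarrow> y a k \<in> E k"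
    and T: "\<And>\<phi>. multilinear_on p E \<phi> \<Longrightarrow> T \<phi> = (\<Sum>a\<in>A. \<phi> (y a))"
  shows "proj_norm p E T \<le> (\<Sum>a\<in>A. \<Prod>k\<in>{1..p}. norm (y a k))"
proof -
  obtain xs where xs: "set xs = A" "distinct xs" using finite_distinct_list[OF fin] by blast
  define ys where "ys = map y xs"
  have rep: "represents p E T ys"
    unfolding represents_def ys_def using xs y T
    by (auto simp: sum_list_distinct_conv_sum_set o_def)
  have cost: "(\<Sum>z\<leftarrow>ys. \<Prod>k\<in>{1..p}. norm (z k)) = (\<Sum>a\<in>A. \<Prod>k\<in>{1..p}. norm (y a k))"
    unfolding ys_def using xs by (simp add: sum_list_distinct_conv_sum_set o_def)
  have "proj_norm p E T \<le> (\<Sum>z\<leftarrow>ys. \<Prod>k\<in>{1..p}. norm (z k))"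
    unfolding proj_norm_def
  proof (rule cInf_lower)
    show "(\<Sum>z\<leftarrow>ys. \<Prod>k\<in>{1..p}. norm (z k)) \<in> {\<Sum>y\<leftarrow>ys. \<Prod>k\<in>{1..p}. norm (y k) |ys. represents p E T ys}"
      using rep by blast
    show "bdd_below {\<Sum>y\<leftarrow>ys. \<Prod>k\<in>{1..p}. norm (y k) |ys. represents p E T ys}"
      by (rule bdd_belowI[of _ 0]) (auto intro!: sum_list_nonneg prod_nonneg)
  qed
  then show ?thesis using cost by simp
qed


lemma abs_sign_real: "\<bar>real_of_int (sign \<sigma>)\<bar> = 1"
  by (simp add: sign_def)

theorem theorem5p1:
  fixes p :: nat and E :: "nat \<Rightarrow> 'a::banach set" and I :: "'i set"
    and d :: "'i \<Rightarrow> nat \<Rightarrow> 'a" and f :: "nat \<Rightarrow> 'a" and S :: "nat \<Rightarrow> real"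
  assumes "p \<ge> 2"
    and "\<And>k. k \<in> {1..p} \<Longrightarrow> subspace (E k) \<and> closed (E k)"
    and "finite I"
    and "\<And>i k. i \<in> I \<Longrightarrow> k \<in> {1..p} \<Longrightarrow> d i k \<in> E k"
    and "\<And>k. k \<in> {1..p} \<Longrightarrow> f k = (\<Sum>i\<in>I. d i k)"
    and "\<And>k. k \<in> {1..p} \<Longrightarrow> S k =
           (measure_pmf.expectation (rademacher I)
              (\<lambda>\<epsilon>. norm (\<Sum>i\<in>I. \<epsilon> i *\<^sub>R d i k) ^ p)) powr (1 / real p)"
  shows "proj_norm p E
           (\<lambda>\<phi>. \<phi> f - (\<Sum>g\<in>{g \<in> {1..p} \<rightarrow>\<^sub>E I. inj_on g {1..p}}. \<phi> (\<lambda>k. d (g k) k)))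
         \<le> (\<Sum>A\<in>{A. A \<subseteq> {1..p} \<and> card A \<le> p - 2}.
              (\<Prod>k\<in>A. norm (f k)) * (\<Prod>k\<in>{1..p} - A. S k) * fact (p - card A))"
proof -
  note p2 = assms(1) and I = assms(3) and d = assms(4) and fdef = assms(5) and Sdef = assms(6)
  have sub: "\<And>k. k \<in> {1..p} \<Longrightarrow> subspace (E k)" using assms(2) by blast
  have p1: "1 \<in> {1..p}" "p > 0" using p2 by auto
  define G where "G = {1..p} \<rightarrow>\<^sub>E I"
  define Q where "Q = {\<sigma>. \<sigma> permutes {1..p}} - {id}"
  define X where "X \<sigma> \<epsilon> k = (\<Sum>i\<in>I. (\<epsilon> k i * \<epsilon> (\<sigma> k) i) *\<^sub>R d i k)"
    for \<sigma> :: "nat \<Rightarrow> nat" and \<epsilon> :: "nat \<Rightarrow> 'i \<Rightarrow> real" and k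
  define c where "c \<sigma> = - real_of_int (sign \<sigma>) / real (card (Om p I))" for \<sigma> :: "nat \<Rightarrow> nat"
  define y where "y = (\<lambda>(\<sigma>, \<epsilon>). (X \<sigma> \<epsilon>)(1 := c \<sigma> *\<^sub>R X \<sigma> \<epsilon> 1))"
  have fQ: "finite Q" unfolding Q_def using finite_permutations[of "{1..p}"] by simp
  have fOm: "finite (Om p I)" using Om_finite[OF I] .
  have cOm: "real (card (Om p I)) > 0" using Om_card[OF I] Dl_card_pos[OF I] by simp
  have XE: "X \<sigma> \<epsilon> k \<in> E k" if "k \<in> {1..p}" for \<sigma> \<epsilon> k
    unfolding X_def using sub[OF that] d that by (intro subspace_sum subspace_scale) auto
  have yE: "y a k \<in> E k" if "k \<in> {1..p}" for a k
  proof -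
    obtain \<sigma> \<epsilon> where a: "a = (\<sigma>, \<epsilon>)" by (cases a)
    show ?thesis unfolding a y_def using XE[OF that] XE[OF p1(1)] sub[OF p1(1)]
      by (auto simp: subspace_scale)
  qed
  have rep: "\<phi> f - (\<Sum>g\<in>{g \<in> {1..p} \<rightarrow>\<^sub>E I. inj_on g {1..p}}. \<phi> (\<lambda>k. d (g k) k))
      = (\<Sum>a\<in>Q \<times> Om p I. \<phi> (y a))" if ml: "multilinear_on p E \<phi>" for \<phi>
  proof -
    have loc: "\<And>u v. (\<forall>k\<in>{1..p}. u k = v k) \<Longrightarrow> \<phi> u = \<phi> v"
      using ml unfolding multilinear_on_def by blast
    have scal: "\<phi> (y (\<sigma>, \<epsilon>)) = c \<sigma> * \<phi> (X \<sigma> \<epsilon>)" for \<sigma> \<epsilon>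
    proof -
      have xE: "\<forall>j\<in>{1..p}. X \<sigma> \<epsilon> j \<in> E j" using XE by blast
      have "\<phi> ((X \<sigma> \<epsilon>)(1 := c \<sigma> *\<^sub>R X \<sigma> \<epsilon> 1)) = c \<sigma> * \<phi> ((X \<sigma> \<epsilon>)(1 := X \<sigma> \<epsilon> 1))"
        using ml xE p1(1) XE[OF p1(1)] unfolding multilinear_on_def by blast
      then show ?thesis unfolding y_def by simp
    qed
    have expX: "\<phi> (X \<sigma> \<epsilon>) = (\<Sum>g\<in>G. (\<Prod>k\<in>{1..p}. \<epsilon> k (g k) * \<epsilon> (\<sigma> k) (g k)) * \<phi> (\<lambda>k. d (g k) k))"
      for \<sigma> \<epsilon>
      unfolding X_def G_def by (rule ml_expand_full[OF ml sub I d])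
    have sumX: "(\<Sum>\<epsilon>\<in>Om p I. \<phi> (y (\<sigma>, \<epsilon>)))
        = - real_of_int (sign \<sigma>) * (\<Sum>g\<in>G. if g \<circ> \<sigma> = g then \<phi> (\<lambda>k. d (g k) k) else 0)"
      if s: "\<sigma> permutes {1..p}" for \<sigma>
    proof -
      have "(\<Sum>\<epsilon>\<in>Om p I. \<phi> (X \<sigma> \<epsilon>))
          = (\<Sum>g\<in>G. (\<Sum>\<epsilon>\<in>Om p I. \<Prod>k\<in>{1..p}. \<epsilon> k (g k) * \<epsilon> (\<sigma> k) (g k)) * \<phi> (\<lambda>k. d (g k) k))"
        unfolding expX by (subst sum.swap) (simp add: sum_distrib_right)
      also have "\<dots> = (\<Sum>g\<in>G. real (card (Om p I)) * (if g \<circ> \<sigma> = g then \<phi> (\<lambda>k. d (g k) k) else 0))"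
      proof (rule sum.cong[OF refl])
        fix g assume "g \<in> G"
        then have "(\<Sum>\<epsilon>\<in>Om p I. \<Prod>k\<in>{1..p}. \<epsilon> k (g k) * \<epsilon> (\<sigma> k) (g k)) = (if g \<circ> \<sigma> = g then real (card (Om p I)) else 0)"
          using Om_prod[OF I s, of g] unfolding G_def by blast
        then show "(\<Sum>\<epsilon>\<in>Om p I. \<Prod>k\<in>{1..p}. \<epsilon> k (g k) * \<epsilon> (\<sigma> k) (g k)) * \<phi> (\<lambda>k. d (g k) k) = real (card (Om p I)) * (if g \<circ> \<sigma> = g then \<phi> (\<lambda>k. d (g k) k) else 0)"
          by simp
      qed
      finally have "(\<Sum>\<epsilon>\<in>Om p I. \<phi> (X \<sigma> \<epsilon>))
          = real (card (Om p I)) * (\<Sum>g\<in>G. if g \<circ> \<sigma> = g then \<phi> (\<lambda>k. d (g k) k) else 0)"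
        by (simp add: sum_distrib_left)
      then have "(\<Sum>\<epsilon>\<in>Om p I. \<phi> (y (\<sigma>, \<epsilon>))) = c \<sigma> * (real (card (Om p I)) * (\<Sum>g\<in>G. if g \<circ> \<sigma> = g then \<phi> (\<lambda>k. d (g k) k) else 0))"
        unfolding scal by (simp add: sum_distrib_left[symmetric])
      then show ?thesis unfolding c_def using cOm by simp
    qed
    define W where "W \<sigma> = real_of_int (sign \<sigma>) * (\<Sum>g\<in>G. if g \<circ> \<sigma> = g then \<phi> (\<lambda>k. d (g k) k) else 0)"
      for \<sigma> :: "nat \<Rightarrow> nat"
    have phif: "\<phi> f = (\<Sum>g\<in>G. \<phi> (\<lambda>k. d (g k) k))"
    proof -
      have "\<phi> f = \<phi> (\<lambda>k. \<Sum>i\<in>I. 1 *\<^sub>R d i k)" by (rule loc) (simp add: fdef)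
      also have "\<dots> = (\<Sum>g\<in>G. (\<Prod>k\<in>{1..p}. 1) * \<phi> (\<lambda>k. d (g k) k))"
        unfolding G_def by (rule ml_expand_full[OF ml sub I d])
      finally show ?thesis by simp
    qed
    have Wid: "W id = \<phi> f" unfolding W_def phif by simp
    have Wall: "(\<Sum>\<sigma>\<in>{\<sigma>. \<sigma> permutes {1..p}}. W \<sigma>)
        = (\<Sum>g\<in>{g \<in> {1..p} \<rightarrow>\<^sub>E I. inj_on g {1..p}}. \<phi> (\<lambda>k. d (g k) k))"
    proof -
      have "(\<Sum>\<sigma>\<in>{\<sigma>. \<sigma> permutes {1..p}}. W \<sigma>)
          = (\<Sum>g\<in>G. \<phi> (\<lambda>k. d (g k) k) * (\<Sum>\<sigma>\<in>{\<sigma>. \<sigma> permutes {1..p}}. if g \<circ> \<sigma> = g then real_of_int (sign \<sigma>) else 0))"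
        unfolding W_def
        by (simp add: sum_distrib_left sum_distrib_right if_distrib if_distribR mult.commute cong: if_cong)
           (rule sum.swap)
      also have "\<dots> = (\<Sum>g\<in>G. if inj_on g {1..p} then \<phi> (\<lambda>k. d (g k) k) else 0)"
        by (intro sum.cong refl) (simp add: sign_sum)
      also have "\<dots> = (\<Sum>g\<in>{g \<in> {1..p} \<rightarrow>\<^sub>E I. inj_on g {1..p}}. \<phi> (\<lambda>k. d (g k) k))"
        unfolding G_def by (rule sum.inter_filter[symmetric]) (simp add: finite_PiE I)
      finally show ?thesis .
    qed
    have "(\<Sum>a\<in>Q \<times> Om p I. \<phi> (y a)) = (\<Sum>\<sigma>\<in>Q. \<Sum>\<epsilon>\<in>Om p I. \<phi> (y (\<sigma>, \<epsilon>)))"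
      by (simp add: sum.cartesian_product)
    also have "\<dots> = (\<Sum>\<sigma>\<in>Q. - W \<sigma>)"
      by (intro sum.cong refl) (auto simp: Q_def W_def sumX)
    also have "\<dots> = - ((\<Sum>\<sigma>\<in>{\<sigma>. \<sigma> permutes {1..p}}. W \<sigma>) - W id)"
      unfolding Q_def using finite_permutations[of "{1..p}"]
      by (simp add: sum_negf sum_diff1 permutes_id)
    finally show ?thesis using Wid Wall by simp
  qed
  define B where "B A = (\<Prod>k\<in>A. norm (f k)) * (\<Prod>k\<in>{1..p} - A. S k)" for A
  have Spos: "S k \<ge> 0" if "k \<in> {1..p}" for k using Sdef[OF that] by simp
  have cost_sigma: "(\<Sum>\<epsilon>\<in>Om p I. \<Prod>k\<in>{1..p}. norm (y (\<sigma>, \<epsilon>) k)) \<le> B {k\<in>{1..p}. \<sigma> k = k}"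
    if s: "\<sigma> permutes {1..p}" for \<sigma>
  proof -
    have ny: "(\<Prod>k\<in>{1..p}. norm (y (\<sigma>, \<epsilon>) k)) = (\<Prod>k\<in>{1..p}. norm (X \<sigma> \<epsilon> k)) / card (Om p I)" for \<epsilon>
    proof -
      have "(\<Prod>k\<in>{1..p}. norm (y (\<sigma>, \<epsilon>) k))
          = (\<Prod>k\<in>{1..p}. (if k = 1 then \<bar>c \<sigma>\<bar> else 1) * norm (X \<sigma> \<epsilon> k))"
        unfolding y_def by (intro prod.cong refl) auto
      also have "\<dots> = \<bar>c \<sigma>\<bar> * (\<Prod>k\<in>{1..p}. norm (X \<sigma> \<epsilon> k))"
        using p1 by (simp add: prod.distrib)
      finally show ?thesis unfolding c_def using abs_sign_real[of \<sigma>] cOm by simp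
    qed
    have hol: "(\<Sum>\<epsilon>\<in>Om p I. \<Prod>k\<in>{1..p}. norm (X \<sigma> \<epsilon> k)) / card (Om p I)
        \<le> (\<Prod>k\<in>{1..p}. ((\<Sum>\<epsilon>\<in>Om p I. norm (X \<sigma> \<epsilon> k) ^ p) / card (Om p I)) powr (1 / real p))"
      using fOm cOm p1 by (intro holder_avg) auto
    have each: "((\<Sum>\<epsilon>\<in>Om p I. norm (X \<sigma> \<epsilon> k) ^ p) / card (Om p I)) powr (1 / real p)
        = (if \<sigma> k = k then norm (f k) else S k)" if k: "k \<in> {1..p}" for k
    proof (cases "\<sigma> k = k")
      case True
      have "X \<sigma> \<epsilon> k = f k" if e: "\<epsilon> \<in> Om p I" for \<epsilon>
      proof -
        have "\<epsilon> k \<in> Dl I" using e k unfolding Om_def by auto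
        then show ?thesis unfolding X_def True fdef[OF k] by (intro sum.cong refl) (simp add: Dl_sq)
      qed
      then have "(\<Sum>\<epsilon>\<in>Om p I. norm (X \<sigma> \<epsilon> k) ^ p) / card (Om p I) = norm (f k) ^ p"
        using cOm by simp
      then show ?thesis using True p1 by (simp add: pow_powr_inv)
    next
      case False
      have j: "\<sigma> k \<in> {1..p}" using k permutes_in_image[OF s] by blast
      have "(\<Sum>\<epsilon>\<in>Om p I. norm (X \<sigma> \<epsilon> k) ^ p)
          = (\<Sum>\<epsilon>\<in>Om p I. (\<lambda>\<delta>. norm (\<Sum>i\<in>I. \<delta> i *\<^sub>R d i k) ^ p) (\<lambda>i. \<epsilon> k i * \<epsilon> (\<sigma> k) i))"
        unfolding X_def by simp
      also have "\<dots> = (\<Sum>\<epsilon>\<in>Om p I. (\<lambda>\<delta>. norm (\<Sum>i\<in>I. \<delta> i *\<^sub>R d i k) ^ p) (\<epsilon> k))"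
        by (rule Om_swap[OF j k]) (use False in auto)
      also have "\<dots> = real (card (Dl I)) ^ (p - 1) * (\<Sum>\<delta>\<in>Dl I. norm (\<Sum>i\<in>I. \<delta> i *\<^sub>R d i k) ^ p)"
        by (rule Om_single[OF I k])
      finally have num: "(\<Sum>\<epsilon>\<in>Om p I. norm (X \<sigma> \<epsilon> k) ^ p)
          = real (card (Dl I)) ^ (p - 1) * (\<Sum>\<delta>\<in>Dl I. norm (\<Sum>i\<in>I. \<delta> i *\<^sub>R d i k) ^ p)" .
      obtain q where q: "p = Suc q" using p1(2) gr0_implies_Suc by blast
      have den: "real (card (Om p I)) = real (card (Dl I)) * real (card (Dl I)) ^ q"
        using Om_card[OF I, of p] q by simp
      have cD: "real (card (Dl I)) > 0" using Dl_card_pos[OF I] by simp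
      have "(\<Sum>\<epsilon>\<in>Om p I. norm (X \<sigma> \<epsilon> k) ^ p) / card (Om p I)
          = (\<Sum>\<delta>\<in>Dl I. norm (\<Sum>i\<in>I. \<delta> i *\<^sub>R d i k) ^ p) / card (Dl I)"
        unfolding num den using cD q by simp
      then show ?thesis using False Sdef[OF k] rademacher_expectation[OF I] by presburger
    qed
    have split: "(\<Prod>k\<in>{1..p}. if \<sigma> k = k then norm (f k) else S k) = B {k\<in>{1..p}. \<sigma> k = k}"
    proof -
      have "(\<Prod>k\<in>{1..p}. if \<sigma> k = k then norm (f k) else S k)
          = (\<Prod>k\<in>{1..p} \<inter> {k. \<sigma> k = k}. norm (f k)) * (\<Prod>k\<in>{1..p} \<inter> - {k. \<sigma> k = k}. S k)"
        by (rule prod.If_cases) simp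
      also have "{1..p} \<inter> {k. \<sigma> k = k} = {k\<in>{1..p}. \<sigma> k = k}" by auto
      also have "{1..p} \<inter> - {k. \<sigma> k = k} = {1..p} - {k\<in>{1..p}. \<sigma> k = k}" by auto
      finally show ?thesis unfolding B_def .
    qed
    have "(\<Sum>\<epsilon>\<in>Om p I. \<Prod>k\<in>{1..p}. norm (y (\<sigma>, \<epsilon>) k))
        = (\<Sum>\<epsilon>\<in>Om p I. \<Prod>k\<in>{1..p}. norm (X \<sigma> \<epsilon> k)) / card (Om p I)"
      unfolding ny by (simp add: sum_divide_distrib)
    also have "\<dots> \<le> (\<Prod>k\<in>{1..p}. if \<sigma> k = k then norm (f k) else S k)"
    proof -
      have "(\<Prod>k\<in>{1..p}. ((\<Sum>\<epsilon>\<in>Om p I. norm (X \<sigma> \<epsilon> k) ^ p) / card (Om p I)) powr (1 / real p))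
          = (\<Prod>k\<in>{1..p}. if \<sigma> k = k then norm (f k) else S k)"
        by (rule prod.cong[OF refl]) (rule each)
      then show ?thesis using hol by simp
    qed
    finally show ?thesis using split by simp
  qed
  have "proj_norm p E
           (\<lambda>\<phi>. \<phi> f - (\<Sum>g\<in>{g \<in> {1..p} \<rightarrow>\<^sub>E I. inj_on g {1..p}}. \<phi> (\<lambda>k. d (g k) k)))
        \<le> (\<Sum>a\<in>Q \<times> Om p I. \<Prod>k\<in>{1..p}. norm (y a k))"
    by (rule proj_norm_le) (use fQ fOm yE rep in auto)
  also have "\<dots> = (\<Sum>\<sigma>\<in>Q. \<Sum>\<epsilon>\<in>Om p I. \<Prod>k\<in>{1..p}. norm (y (\<sigma>, \<epsilon>) k))"
    by (simp add: sum.cartesian_product)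
  also have "\<dots> \<le> (\<Sum>\<sigma>\<in>Q. B {k\<in>{1..p}. \<sigma> k = k})"
    by (rule sum_mono) (use cost_sigma in \<open>auto simp: Q_def\<close>)
  also have "\<dots> \<le> (\<Sum>A\<in>{A. A \<subseteq> {1..p} \<and> card A \<le> p - 2}. B A * fact (p - card A))"
    unfolding Q_def
    by (rule perm_fix_sum) (auto simp: B_def intro!: mult_nonneg_nonneg prod_nonneg Spos)
  finally show ?thesis unfolding B_def .
qed

end
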